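(* Let $N\geq1$ and $0\leq m\leq2$. Let $a\in C(\mathbb{R}^N)\cap L^\infty(\mathbb{R}^N)$ with $a^+=\max\{0,a\}\not\equiv0$ and $\limsup_{|x|\to\infty}a(x)<0$. Let $J\in L^1(\mathbb{R}^N)$ be nonnegative, radially symmetric, with $\int_{\mathbb{R}^N}J=1$, and for $\varepsilon>0$ let $J_\varepsilon(z)=\varepsilon^{-N}J(z/\varepsilon)$. Suppose that there is $\varepsilon_0>0$ such that, for every $0<\varepsilon<\varepsilon_0$, there is a nonnegative $u_\varepsilon\in L^\infty(\mathbb{R}^N)$ satisfying $$\frac{1}{\varepsilon^m}\big(J_\varepsilon\ast u_\varepsilon-u_\varepsilon\big)+u_\varepsilon(a-u_\varepsilon)=0\quad\text{a.e. in }\mathbb{R}^N.$$ Then there exists $\varepsilon_{m,a^+}>0$ such that, for all $0<\varepsilon<\min\{\varepsilon_0,\varepsilon_{m,a^+}\}$, $u_\varepsilon$ has a representative in $C_0(\mathbb{R}^N)$ (i.e. $u_\varepsilon\in C_0(\mathbb{R}^N)$), and either $u_\varepsilon>0$ in $\mathbb{R}^N$ or $u_\varepsilon\equiv0$ in $\mathbb{R}^N$.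
   Context: $(J_\varepsilon\ast u)(x)=\int_{\mathbb{R}^N}J_\varepsilon(x-y)u(y)\,\mathrm{d}y$. $C_0(\mathbb{R}^N)$ denotes continuous functions vanishing at infinity. *)

theory Defs
  imports "HOL-Analysis.Analysis"
begin

definition kernel_scale :: "real \<Rightarrow> ('a::euclidean_space \<Rightarrow> real) \<Rightarrow> 'a \<Rightarrow> real" where
  "kernel_scale eps J z = J (z /\<^sub>R eps) / eps ^ DIM('a)"

definition conv :: "('a::euclidean_space \<Rightarrow> real) \<Rightarrow> ('a \<Rightarrow> real) \<Rightarrow> 'a \<Rightarrow> real" where
  "conv J u x = (LINT y|lborel. J (x - y) * u y)"

definition Linf :: "('a::euclidean_space \<Rightarrow> real) \<Rightarrow> bool" where
  "Linf u \<longleftrightarrow> u \<in> borel_measurable lborel \<and> (\<exists>C. AE x in lborel. \<bar>u x\<bar> \<le> C)"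

definition C0 :: "('a::euclidean_space \<Rightarrow> real) \<Rightarrow> bool" where
  "C0 v \<longleftrightarrow> continuous_on UNIV v \<and> (v \<longlongrightarrow> 0) at_infinity"

end

theory Submission
  imports Defs
begin


lemma nn_integral_affine_eucl:
  fixes f :: "'a::euclidean_space \<Rightarrow> ennreal" and c :: real
  assumes [measurable]: "f \<in> borel_measurable borel" and c: "c \<noteq> 0"
  shows "(\<integral>\<^sup>+x. f x \<partial>lborel) = ennreal (\<bar>c\<bar> ^ DIM('a)) * (\<integral>\<^sup>+x. f (t + c *\<^sub>R x) \<partial>lborel)"
  by (subst lborel_affine[OF c, of t])
     (simp add: nn_integral_density nn_integral_distr nn_integral_cmult)

lemma integrable_affine_eucl:
  fixes f :: "'a::euclidean_space \<Rightarrow> real"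
  assumes f: "integrable lborel f" and c: "c \<noteq> 0"
  shows "integrable lborel (\<lambda>x. f (t + c *\<^sub>R x))"
  using f f[THEN borel_measurable_integrable] c unfolding integrable_iff_bounded
  by (subst (asm) nn_integral_affine_eucl[where c=c and t=t]) (auto simp: ennreal_mult_less_top)

lemma integrable_affine_eucl_iff:
  fixes f :: "'a::euclidean_space \<Rightarrow> real"
  assumes c: "c \<noteq> 0"
  shows "integrable lborel (\<lambda>x. f (t + c *\<^sub>R x)) \<longleftrightarrow> integrable lborel f"
proof
  assume "integrable lborel (\<lambda>x. f (t + c *\<^sub>R x))"
  from integrable_affine_eucl[OF this, of "1/c" "- t /\<^sub>R c"] c
  show "integrable lborel f" by (simp add: algebra_simps)
qed (rule integrable_affine_eucl[OF _ c])

lemma integral_affine_eucl: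
  fixes f :: "'a::euclidean_space \<Rightarrow> real" and c :: real
  assumes c: "c \<noteq> 0"
  shows "(\<integral>x. f x \<partial>lborel) = \<bar>c\<bar> ^ DIM('a) * (\<integral>x. f (t + c *\<^sub>R x) \<partial>lborel)"
proof cases
  assume f[measurable]: "integrable lborel f" then show ?thesis
    using c f f[THEN borel_measurable_integrable] integrable_affine_eucl[OF f c, of t]
    by (subst lborel_affine[OF c, of t])
       (simp add: integral_density integral_distr)
next
  assume "\<not> integrable lborel f" with c show ?thesis
    by (simp add: integrable_affine_eucl_iff not_integrable_integral_eq)
qed

lemma integral_transl:
  fixes f :: "'a::euclidean_space \<Rightarrow> real"
  shows "(\<integral>x. f (x + h) \<partial>lborel) = (\<integral>x. f x \<partial>lborel)"
  using integral_affine_eucl[where c=1 and f=f and t=h] by (simp add: add.commute)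

lemma integrable_transl:
  fixes f :: "'a::euclidean_space \<Rightarrow> real"
  shows "integrable lborel (\<lambda>x. f (x + h)) \<longleftrightarrow> integrable lborel f"
  using integrable_affine_eucl_iff[where c=1 and f=f and t=h] by (simp add: add.commute)

lemma integral_refl:
  fixes f :: "'a::euclidean_space \<Rightarrow> real"
  shows "(\<integral>y. f y \<partial>lborel) = (\<integral>z. f (x - z) \<partial>lborel)"
  using integral_affine_eucl[where c="-1" and f=f and t=x] by simp

lemma integrable_refl:
  fixes f :: "'a::euclidean_space \<Rightarrow> real"
  shows "integrable lborel (\<lambda>z. f (x - z)) \<longleftrightarrow> integrable lborel f"
  using integrable_affine_eucl_iff[where c="-1" and f=f and t=x] by simp

lemma nn_integral_transl:
  fixes f :: "'a::euclidean_space \<Rightarrow> ennreal"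
  assumes [measurable]: "f \<in> borel_measurable borel"
  shows "(\<integral>\<^sup>+x. f (x + h) \<partial>lborel) = (\<integral>\<^sup>+x. f x \<partial>lborel)"
  using nn_integral_affine_eucl[where c=1 and f=f and t=h] by (simp add: add.commute)

lemma cont_AE_le_open:
  fixes f :: "'a::euclidean_space \<Rightarrow> real"
  assumes f: "continuous_on UNIV f" and S: "open S"
    and ae: "AE x in lborel. x \<in> S \<longrightarrow> f x \<le> 0"
  shows "\<forall>x\<in>S. f x \<le> 0"
proof (rule ccontr)
  assume "\<not> (\<forall>x\<in>S. f x \<le> 0)"
  then obtain x where x: "x \<in> S" "f x > 0" by auto
  define T where "T = S \<inter> {y. f y > 0}"
  have "open {y. f y > 0}"
    using f by (simp add: continuous_on_open_vimage[OF open_UNIV] vimage_def open_Collect_less continuous_on_const)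
  then have oT: "open T" using S by (auto simp: T_def)
  have "x \<in> T" using x by (auto simp: T_def)
  then obtain r where r: "r > 0" "ball x r \<subseteq> T" using oT open_contains_ball by blast
  have "AE y in lborel. y \<notin> T" using ae by eventually_elim (auto simp: T_def)
  then have "emeasure lborel T = 0"
    using oT by (subst (asm) AE_iff_measurable[of T]) auto
  then have "emeasure lborel (ball x r) = 0"
    using r(2) oT by (metis emeasure_eq_0 borel_open sets_lborel)
  moreover have "measure lborel (ball x r) > 0" using content_ball_pos r by auto
  ultimately show False by (simp add: measure_def)
qed



lemma measure_lt_of_emeasure_lt:
  assumes "emeasure M S < ennreal c" "c \<ge> 0"
  shows "measure M S < c"
proof -
  have "emeasure M S < top" by (rule order.strict_trans[OF assms(1)]) simp
  then have "emeasure M S = ennreal (measure M S)" by (simp add: emeasure_eq_ennreal_measure)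
  then show ?thesis using assms ennreal_less_iff[OF measure_nonneg[of M S], of c] by simp
qed

lemma indicator_transl_cont:
  fixes A :: "'a::euclidean_space set"
  assumes A: "A \<in> sets lborel" "emeasure lborel A < \<infinity>" and e: "e > 0"
  shows "\<exists>d>0. \<forall>h. norm h < d \<longrightarrow>
     (LINT x|lborel. \<bar>indicator A (x+h) - indicator A x :: real\<bar>) < e"
proof -
  have Ab[measurable]: "A \<in> sets borel" using A by simp
  define B where "B n = A \<inter> cball 0 (real n)" for n::nat
  have Bb[measurable]: "B n \<in> sets borel" for n unfolding B_def by simp
  have UB: "(\<Union>n. B n) = A"
  proof
    show "A \<subseteq> (\<Union>n. B n)"
    proof
      fix x assume "x \<in> A"
      obtain n where "norm x \<le> real n" using real_arch_simple by blast
      then show "x \<in> (\<Union>n. B n)" using \<open>x \<in> A\<close> by (auto simp: B_def)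
    qed
  qed (auto simp: B_def)
  have "(\<lambda>n. measure lborel (B n)) \<longlonglongrightarrow> measure lborel (\<Union>n. B n)"
    by (rule Lim_measure_incseq) (use A UB in \<open>auto simp: incseq_def B_def\<close>)
  then have "(\<lambda>n. measure lborel (B n)) \<longlonglongrightarrow> measure lborel A" using UB by simp
  then have "eventually (\<lambda>n. dist (measure lborel (B n)) (measure lborel A) < e/16) sequentially"
    using e unfolding tendsto_iff by (metis divide_pos_pos zero_less_numeral)
  then obtain n where n: "dist (measure lborel (B n)) (measure lborel A) < e/16"
    by (auto simp: eventually_sequentially)
  have ABn: "measure lborel (A - B n) < e/16"
  proof -
    have "measure lborel (A - B n) = measure lborel A - measure lborel (B n)"
      using A by (intro measure_Diff) (auto simp: B_def)
    then show ?thesis using n unfolding dist_real_def by linarith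
  qed
  have "B n \<in> sets lebesgue" by simp
  then obtain T where T: "closed T" "T \<subseteq> B n" "B n - T \<in> lmeasurable"
      "emeasure lebesgue (B n - T) < ennreal (e/16)"
    using sets_lebesgue_inner_closed[of "B n" "e/16"] e by auto
  have Tb[measurable]: "T \<in> sets borel" using T(1) by simp
  have "emeasure lborel (B n - T) < ennreal (e/16)" using T(4) by simp
  then have BT: "measure lborel (B n - T) < e/16"
    using e by (intro measure_lt_of_emeasure_lt) auto
  have cT: "compact T"
    using T(1,2) by (metis B_def bounded_cball bounded_subset compact_eq_bounded_closed inf.boundedE)
  obtain U where U: "open U" "A \<subseteq> U" "emeasure lborel (U - A) < e/16"
    using outer_regular_lborel[OF Ab, of "e/16"] e by auto
  have Ub[measurable]: "U \<in> sets borel" using U(1) by simp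
  have UA: "measure lborel (U - A) < e/16"
    using U(3) e by (intro measure_lt_of_emeasure_lt) auto
  have UAfin: "emeasure lborel (U - A) < \<infinity>"
    by (rule order.strict_trans[OF U(3)]) simp
  obtain d where d: "d > 0" "\<forall>x\<in>T. \<forall>y\<in>-U. d \<le> dist x y"
  proof -
    have "T \<inter> - U = {}" using T(2) U(2) by (auto simp: B_def)
    then show ?thesis using separate_compact_closed[OF cT, of "-U"] U(1) that by auto
  qed
  define D1 where "D1 = A - T"
  define D2 where "D2 = U - T"
  have D1b[measurable]: "D1 \<in> sets borel" and D2b[measurable]: "D2 \<in> sets borel"
    by (auto simp: D1_def D2_def)
  have D1fin: "emeasure lborel D1 < \<infinity>"
    using A(2) by (metis D1_def Diff_subset emeasure_mono order.strict_trans1 sets_lborel Ab)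
  have D2fin: "emeasure lborel D2 < \<infinity>"
  proof -
    have "D2 \<subseteq> (U - A) \<union> A" by (auto simp: D2_def)
    then have "emeasure lborel D2 \<le> emeasure lborel ((U - A) \<union> A)" by (intro emeasure_mono) auto
    also have "\<dots> \<le> emeasure lborel (U - A) + emeasure lborel A" by (intro emeasure_subadditive) auto
    also have "\<dots> < \<infinity>" using UAfin A(2) by (simp add: ennreal_add_less_top)
    finally show ?thesis .
  qed
  have mD1: "measure lborel D1 < e/8"
  proof -
    have "D1 \<subseteq> (A - B n) \<union> (B n - T)" by (auto simp: D1_def)
    then have "measure lborel D1 \<le> measure lborel ((A - B n) \<union> (B n - T))"
      using A by (intro measure_mono_fmeasurable) (auto simp: fmeasurable_def B_def intro: order.strict_trans1[OF emeasure_mono])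
    also have "\<dots> \<le> measure lborel (A - B n) + measure lborel (B n - T)"
      by (intro measure_Un_le) auto
    finally show ?thesis using ABn BT by simp
  qed
  have mD2: "measure lborel D2 < 3*e/16"
  proof -
    have "D2 \<subseteq> (U - A) \<union> D1" by (auto simp: D1_def D2_def)
    moreover have "emeasure lborel ((U - A) \<union> D1) < \<infinity>"
    proof -
      have "emeasure lborel ((U - A) \<union> D1) \<le> emeasure lborel (U - A) + emeasure lborel D1"
        by (intro emeasure_subadditive) auto
      also have "\<dots> < \<infinity>" using UAfin D1fin by (simp add: ennreal_add_less_top)
      finally show ?thesis .
    qed
    ultimately have "measure lborel D2 \<le> measure lborel ((U - A) \<union> D1)"
      by (intro measure_mono_fmeasurable) (auto simp: fmeasurable_def)
    also have "\<dots> \<le> measure lborel (U - A) + measure lborel D1"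
      by (intro measure_Un_le) auto
    finally show ?thesis using UA mD1 by simp
  qed
  have iD1: "integrable lborel (indicator D1 :: 'a \<Rightarrow> real)" using D1fin by simp
  have iD2: "integrable lborel (indicator D2 :: 'a \<Rightarrow> real)" using D2fin by simp
  have iA: "integrable lborel (indicator A :: 'a \<Rightarrow> real)" using A by simp
  show ?thesis
  proof (intro exI[of _ d] conjI allI impI d(1))
    fix h :: 'a assume h: "norm h < d"
    have TU: "x + h \<in> U" "x - h \<in> U" if "x \<in> T" for x
    proof -
      have "dist x (x + h) < d" "dist x (x - h) < d" using h by (auto simp: dist_norm)
      then show "x + h \<in> U" "x - h \<in> U" using d(2) that by force+
    qed
    have pw: "\<bar>indicator A (x+h) - indicator A x :: real\<bar> \<le>
       indicator D1 (x+h) + indicator D1 x + indicator D2 (x+h) + indicator D2 x" for x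
    proof -
      have "x + h \<in> T \<Longrightarrow> x \<in> U" using TU[of "x+h"] by simp
      moreover have "x \<in> T \<Longrightarrow> x + h \<in> U" using TU[of x] by simp
      ultimately show ?thesis using T(2) by (auto simp: indicator_def D1_def D2_def B_def)
    qed
    have i1: "integrable lborel (\<lambda>x. indicator D1 (x+h) :: real)"
      using iD1 integrable_transl[of "indicator D1" h] by simp
    have i2: "integrable lborel (\<lambda>x. indicator D2 (x+h) :: real)"
      using iD2 integrable_transl[of "indicator D2" h] by simp
    have i3: "integrable lborel (\<lambda>x. indicator A (x+h) :: real)"
      using iA integrable_transl[of "indicator A" h] by simp
    have "(LINT x|lborel. \<bar>indicator A (x+h) - indicator A x :: real\<bar>) \<le>
       (LINT x|lborel. indicator D1 (x+h) + indicator D1 x + indicator D2 (x+h) + indicator D2 x)"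
      using i1 i2 i3 iD1 iD2 iA pw by (intro integral_mono) auto
    also have "\<dots> = (LINT x|lborel. indicator D1 (x+h)) + (LINT x|lborel. indicator D1 x)
        + (LINT x|lborel. indicator D2 (x+h)) + (LINT x|lborel. indicator D2 x)"
      using i1 i2 iD1 iD2 by simp
    also have "\<dots> = 2 * measure lborel D1 + 2 * measure lborel D2"
      by (simp add: integral_transl[of "indicator D1" h] integral_transl[of "indicator D2" h])
    also have "\<dots> < e" using mD1 mD2 e by linarith
    finally show "(LINT x|lborel. \<bar>indicator A (x+h) - indicator A x :: real\<bar>) < e" .
  qed
qed



lemma L1_transl_cont:
  fixes f :: "'a::euclidean_space \<Rightarrow> real"
  assumes "integrable lborel f"
  shows "\<forall>e>0. \<exists>d>0. \<forall>h. norm h < d \<longrightarrow> (LINT x|lborel. \<bar>f (x+h) - f x\<bar>) < e"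
  using assms
proof (induction rule: integrable_induct)
  case (base A c)
  show ?case
  proof (intro allI impI)
    fix e :: real assume e: "e > 0"
    have "e / (\<bar>c\<bar> + 1) > 0" using e by simp
    then obtain d where d: "d > 0" "\<And>h. norm h < d \<Longrightarrow>
        (LINT x|lborel. \<bar>indicator A (x+h) - indicator A x :: real\<bar>) < e / (\<bar>c\<bar> + 1)"
      using indicator_transl_cont[OF base(1,2)] by blast
    show "\<exists>d>0. \<forall>h. norm h < d \<longrightarrow>
        (LINT x|lborel. \<bar>indicator A (x+h) *\<^sub>R c - indicator A x *\<^sub>R c\<bar>) < e"
    proof (intro exI[of _ d] conjI allI impI d(1))
      fix h :: 'a assume h: "norm h < d"
      have eq: "\<bar>indicator A (x+h) *\<^sub>R c - indicator A x *\<^sub>R c\<bar> =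
          \<bar>indicator A (x+h) - indicator A x :: real\<bar> * \<bar>c\<bar>" for x
        by (simp add: abs_mult[symmetric] left_diff_distrib)
      have X: "(LINT x|lborel. \<bar>indicator A (x+h) - indicator A x :: real\<bar>) < e / (\<bar>c\<bar> + 1)"
        using d(2) h by blast
      have X0: "(LINT x|lborel. \<bar>indicator A (x+h) - indicator A x :: real\<bar>) \<ge> 0"
        by (intro integral_nonneg_AE) auto
      have "(LINT x|lborel. \<bar>indicator A (x+h) *\<^sub>R c - indicator A x *\<^sub>R c\<bar>)
          = (LINT x|lborel. \<bar>indicator A (x+h) - indicator A x :: real\<bar>) * \<bar>c\<bar>"
        unfolding eq by simp
      also have "\<dots> \<le> e / (\<bar>c\<bar> + 1) * \<bar>c\<bar>"
        using X by (intro mult_right_mono) auto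
      also have "\<dots> < e"
        using e by (simp add: field_simps)
      finally show "(LINT x|lborel. \<bar>indicator A (x+h) *\<^sub>R c - indicator A x *\<^sub>R c\<bar>) < e" .
    qed
  qed
next
  case (add f g)
  show ?case
  proof (intro allI impI)
    fix e :: real assume e: "e > 0"
    obtain d1 where d1: "d1 > 0" "\<And>h. norm h < d1 \<Longrightarrow> (LINT x|lborel. \<bar>f (x+h) - f x\<bar>) < e/2"
      using add e by (meson half_gt_zero)
    obtain d2 where d2: "d2 > 0" "\<And>h. norm h < d2 \<Longrightarrow> (LINT x|lborel. \<bar>g (x+h) - g x\<bar>) < e/2"
      using add e by (meson half_gt_zero)
    show "\<exists>d>0. \<forall>h. norm h < d \<longrightarrow> (LINT x|lborel. \<bar>(f (x+h) + g (x+h)) - (f x + g x)\<bar>) < e"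
    proof (intro exI[of _ "min d1 d2"] conjI allI impI)
      show "min d1 d2 > 0" using d1 d2 by simp
      fix h :: 'a assume h: "norm h < min d1 d2"
      have fi: "integrable lborel (\<lambda>x. f (x+h))" using add integrable_transl[of f h] by simp
      have gi: "integrable lborel (\<lambda>x. g (x+h))" using add integrable_transl[of g h] by simp
      have "(LINT x|lborel. \<bar>(f (x+h) + g (x+h)) - (f x + g x)\<bar>)
          \<le> (LINT x|lborel. \<bar>f (x+h) - f x\<bar> + \<bar>g (x+h) - g x\<bar>)"
        using fi gi add by (intro integral_mono) auto
      also have "\<dots> = (LINT x|lborel. \<bar>f (x+h) - f x\<bar>) + (LINT x|lborel. \<bar>g (x+h) - g x\<bar>)"
      proof (rule Bochner_Integration.integral_add)
        show "integrable lborel (\<lambda>x. \<bar>f (x+h) - f x\<bar>)" using fi add by auto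
        show "integrable lborel (\<lambda>x. \<bar>g (x+h) - g x\<bar>)" using gi add by auto
      qed
      also have "\<dots> < e" using d1(2)[of h] d2(2)[of h] h by simp
      finally show "(LINT x|lborel. \<bar>(f (x+h) + g (x+h)) - (f x + g x)\<bar>) < e" .
    qed
  qed
next
  case (lim f s)
  have fint: "integrable lborel f" using lim by blast
  have sint: "\<And>i. integrable lborel (s i)" using lim by blast
  have Ps: "\<And>i. \<forall>e>0. \<exists>d>0. \<forall>h. norm h < d \<longrightarrow> (LINT x|lborel. \<bar>s i (x+h) - s i x\<bar>) < e"
    using lim by blast
  have cnv: "\<And>x. (\<lambda>i. s i x) \<longlonglongrightarrow> f x" using lim by simp
  have bnd: "\<And>i x. \<bar>s i x\<bar> \<le> 2 * \<bar>f x\<bar>" using lim by simp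
  have fm[measurable]: "f \<in> borel_measurable lborel" using fint by auto
  have sm[measurable]: "s i \<in> borel_measurable lborel" for i using sint by auto
  have "(\<lambda>i. LINT x|lborel. \<bar>s i x - f x\<bar>) \<longlonglongrightarrow> (LINT (x::'a)|lborel. (0::real))"
  proof (rule Bochner_Integration.integral_dominated_convergence[where w="\<lambda>x. 3 * \<bar>f x\<bar>" and s="\<lambda>i x. \<bar>s i x - f x\<bar>" and f="\<lambda>x. 0"])
    show "integrable lborel (\<lambda>x. 3 * \<bar>f x\<bar>)" using fint by auto
    show "AE x in lborel. (\<lambda>i. \<bar>s i x - f x\<bar>) \<longlonglongrightarrow> 0"
      using cnv by (intro AE_I2) (metis (no_types) LIM_zero tendsto_rabs_zero space_borel space_lborel UNIV_I)
    show "AE x in lborel. norm \<bar>s i x - f x\<bar> \<le> 3 * \<bar>f x\<bar>" for i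
    proof (intro AE_I2)
      fix x have "\<bar>s i x\<bar> \<le> 2 * \<bar>f x\<bar>" using bnd by blast
      then show "norm \<bar>s i x - f x\<bar> \<le> 3 * \<bar>f x\<bar>" by simp
    qed
  qed auto
  then have L: "(\<lambda>i. LINT x|lborel. \<bar>s i x - f x\<bar>) \<longlonglongrightarrow> 0" by simp
  show ?case
  proof (intro allI impI)
    fix e :: real assume e: "e > 0"
    then have "eventually (\<lambda>i. (LINT x|lborel. \<bar>s i x - f x\<bar>) < e/3) sequentially"
      using L by (intro order_tendstoD) auto
    then obtain i where i: "(LINT x|lborel. \<bar>s i x - f x\<bar>) < e/3"
      by (auto simp: eventually_sequentially)
    obtain d where d: "d > 0" "\<And>h. norm h < d \<Longrightarrow> (LINT x|lborel. \<bar>s i (x+h) - s i x\<bar>) < e/3"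
      using Ps[of i] e by (meson divide_pos_pos zero_less_numeral)
    show "\<exists>d>0. \<forall>h. norm h < d \<longrightarrow> (LINT x|lborel. \<bar>f (x+h) - f x\<bar>) < e"
    proof (intro exI[of _ d] conjI allI impI d(1))
      fix h :: 'a assume h: "norm h < d"
      have i1: "integrable lborel (\<lambda>x. \<bar>s i x - f x\<bar>)" using sint fint by auto
      have i2: "integrable lborel (\<lambda>x. \<bar>s i (x+h) - f (x+h)\<bar>)"
        using i1 integrable_transl[of "\<lambda>x. \<bar>s i x - f x\<bar>" h] by simp
      have i3: "integrable lborel (\<lambda>x. \<bar>s i (x+h) - s i x\<bar>)"
        using sint[of i] integrable_transl[of "s i" h] by auto
      have i4: "integrable lborel (\<lambda>x. \<bar>f (x+h) - f x\<bar>)"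
        using fint integrable_transl[of f h] by auto
      have "(LINT x|lborel. \<bar>f (x+h) - f x\<bar>) \<le>
          (LINT x|lborel. \<bar>s i (x+h) - f (x+h)\<bar> + \<bar>s i (x+h) - s i x\<bar> + \<bar>s i x - f x\<bar>)"
        using i1 i2 i3 i4 by (intro integral_mono) auto
      also have "\<dots> = (LINT x|lborel. \<bar>s i (x+h) - f (x+h)\<bar>) + (LINT x|lborel. \<bar>s i (x+h) - s i x\<bar>)
           + (LINT x|lborel. \<bar>s i x - f x\<bar>)"
        using i1 i2 i3 by simp
      also have "(LINT x|lborel. \<bar>s i (x+h) - f (x+h)\<bar>) = (LINT x|lborel. \<bar>s i x - f x\<bar>)"
        using integral_transl[of "\<lambda>x. \<bar>s i x - f x\<bar>" h] by simp
      finally show "(LINT x|lborel. \<bar>f (x+h) - f x\<bar>) < e"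
        using i d(2)[OF h] by linarith
    qed
  qed
qed



lemma conv_integrable:
  fixes f g :: "'a::euclidean_space \<Rightarrow> real"
  assumes f: "integrable lborel f" and g: "g \<in> borel_measurable lborel" and gb: "\<And>y. \<bar>g y\<bar> \<le> C"
  shows "integrable lborel (\<lambda>y. f (x - y) * g y)"
proof -
  have fm[measurable]: "f \<in> borel_measurable borel" using f by auto
  have gm[measurable]: "g \<in> borel_measurable borel" using g by auto
  have fi: "integrable lborel (\<lambda>y. C * f (x - y))"
    using f integrable_refl[of f x] by auto
  show ?thesis
  proof (rule Bochner_Integration.integrable_bound[OF fi])
    show "(\<lambda>y. f (x - y) * g y) \<in> borel_measurable lborel" by measurable
    show "AE y in lborel. norm (f (x - y) * g y) \<le> norm (C * f (x - y))"
    proof (intro AE_I2)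
      fix y
      have "C \<ge> 0" using gb[of y] by simp
      then show "norm (f (x - y) * g y) \<le> norm (C * f (x - y))"
        using mult_left_mono[OF gb[of y] abs_ge_zero[of "f (x - y)"]] by (simp add: abs_mult mult.commute)
    qed
  qed
qed

lemma conv_cont:
  fixes f g :: "'a::euclidean_space \<Rightarrow> real"
  assumes f: "integrable lborel f" and g: "g \<in> borel_measurable lborel" and gb: "\<And>y. \<bar>g y\<bar> \<le> C"
  shows "continuous_on UNIV (\<lambda>x. LINT y|lborel. f (x - y) * g y)"
  unfolding continuous_on_iff
proof (intro ballI allI impI)
  fix x :: 'a and e :: real assume e: "e > 0"
  have C0: "C \<ge> 0" using gb[of 0] by simp
  have fm[measurable]: "f \<in> borel_measurable borel" using f by auto
  have gm[measurable]: "g \<in> borel_measurable borel" using g by auto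
  obtain d where d: "d > 0" "\<And>h. norm h < d \<Longrightarrow> (LINT z|lborel. \<bar>f (z+h) - f z\<bar>) < e / (C + 1)"
    using L1_transl_cont[OF f] e C0 by (metis add_nonneg_pos divide_pos_pos zero_less_one)
  show "\<exists>d>0. \<forall>x'\<in>UNIV. dist x' x < d \<longrightarrow>
      dist (LINT y|lborel. f (x' - y) * g y) (LINT y|lborel. f (x - y) * g y) < e"
  proof (intro exI[of _ d] conjI ballI impI d(1))
    fix x' :: 'a assume dx: "dist x' x < d"
    have i1: "integrable lborel (\<lambda>y. f (x' - y) * g y)" by (rule conv_integrable[OF f g gb])
    have i2: "integrable lborel (\<lambda>y. f (x - y) * g y)" by (rule conv_integrable[OF f g gb])
    have i3: "integrable lborel (\<lambda>y. \<bar>f (x' - y) - f (x - y)\<bar>)"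
      using f integrable_refl[of f x'] integrable_refl[of f x] by auto
    have "dist (LINT y|lborel. f (x' - y) * g y) (LINT y|lborel. f (x - y) * g y)
        = \<bar>LINT y|lborel. (f (x' - y) - f (x - y)) * g y\<bar>"
      using i1 i2 by (simp add: dist_real_def left_diff_distrib)
    also have "\<dots> \<le> (LINT y|lborel. \<bar>(f (x' - y) - f (x - y)) * g y\<bar>)"
      by (rule integral_abs_bound)
    also have "\<dots> \<le> (LINT y|lborel. \<bar>f (x' - y) - f (x - y)\<bar> * C)"
    proof (rule Bochner_Integration.integral_mono)
      show "integrable lborel (\<lambda>y. \<bar>(f (x' - y) - f (x - y)) * g y\<bar>)"
        using i1 i2 by (simp add: left_diff_distrib)
      show "integrable lborel (\<lambda>y. \<bar>f (x' - y) - f (x - y)\<bar> * C)" using i3 by simp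
      fix y show "\<bar>(f (x' - y) - f (x - y)) * g y\<bar> \<le> \<bar>f (x' - y) - f (x - y)\<bar> * C"
        using gb[of y] by (simp add: abs_mult mult_left_mono)
    qed
    also have "\<dots> = (LINT y|lborel. \<bar>f (x' - y) - f (x - y)\<bar>) * C" by simp
    also have "(LINT y|lborel. \<bar>f (x' - y) - f (x - y)\<bar>) = (LINT z|lborel. \<bar>f (z + (x' - x)) - f z\<bar>)"
      using integral_refl[of "\<lambda>y. \<bar>f (x' - y) - f (x - y)\<bar>" x] by (simp add: algebra_simps)
    also have "(LINT z|lborel. \<bar>f (z + (x' - x)) - f z\<bar>) * C \<le> e / (C + 1) * C"
      using d(2)[of "x' - x"] dx C0 by (intro mult_right_mono) (auto simp: dist_norm less_imp_le)
    also have "\<dots> < e" using e C0 by (simp add: field_simps)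
    finally show "dist (LINT y|lborel. f (x' - y) * g y) (LINT y|lborel. f (x - y) * g y) < e" .
  qed
qed



lemma root_unique:
  fixes r s b q :: real
  assumes "r \<ge> 0" "s \<ge> 0" "r * r + b * r = q" "s * s + b * s = q" "q > 0"
  shows "r = s"
proof (rule ccontr)
  assume ne: "r \<noteq> s"
  have "(r - s) * (r + s + b) = 0" using assms(3,4) by (simp add: algebra_simps)
  then have bq: "b = - (r + s)" using ne by simp
  have "q = r * r + (- (r + s)) * r" using assms(3)[symmetric] bq by simp
  also have "\<dots> = - (r * s)" by (simp add: algebra_simps)
  finally have "q = - (r * s)" .
  moreover have "r * s \<ge> 0" using assms(1,2) by simp
  ultimately show False using assms(5) by simp
qed

lemma tail_small:
  fixes K :: "'a::euclidean_space \<Rightarrow> real"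
  assumes K: "integrable lborel K" and Kn: "\<And>z. K z \<ge> 0" and d: "d > 0"
  shows "\<exists>\<rho>. (LINT z|lborel. K z * indicator (- ball 0 \<rho>) z) < d"
proof -
  have Km[measurable]: "K \<in> borel_measurable borel" using K by auto
  have "(\<lambda>n::nat. LINT z|lborel. K z * indicator (- ball 0 (real n)) z) \<longlonglongrightarrow> (LINT (z::'a)|lborel. (0::real))"
  proof (rule integral_dominated_convergence[where w=K])
    show "AE z in lborel. (\<lambda>n. K z * indicator (- ball 0 (real n)) z) \<longlonglongrightarrow> 0"
    proof (intro AE_I2)
      fix z :: 'a
      obtain N :: nat where N: "norm z < real N" using reals_Archimedean2 by blast
      have "eventually (\<lambda>n. K z * indicator (- ball 0 (real n)) z = 0) sequentially"
        unfolding eventually_sequentially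
        using N by (intro exI[of _ N]) (auto simp: indicator_def)
      then show "(\<lambda>n. K z * indicator (- ball 0 (real n)) z) \<longlonglongrightarrow> 0"
        by (rule tendsto_eventually)
    qed
    show "AE z in lborel. norm (K z * indicator (- ball 0 (real n)) z) \<le> K z" for n
      using Kn by (intro AE_I2) (auto simp: indicator_def)
  qed (use K in auto)
  then have "(\<lambda>n::nat. LINT z|lborel. K z * indicator (- ball 0 (real n)) z) \<longlonglongrightarrow> 0" by simp
  then have "eventually (\<lambda>n. (LINT z|lborel. K z * indicator (- ball 0 (real n)) z) < d) sequentially"
    using d by (intro order_tendstoD) auto
  then show ?thesis by (auto simp: eventually_sequentially)
qed

lemma vanish_at_infinity:
  fixes K v w :: "'a::euclidean_space \<Rightarrow> real"
  assumes K: "integrable lborel K" and Kn: "\<And>z. K z \<ge> 0" and K1: "(LINT z|lborel. K z) = 1"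
    and vm: "v \<in> borel_measurable borel"
    and v0: "\<And>x. 0 \<le> v x" and vV: "\<And>x. v x \<le> V"
    and w: "\<And>x. w x = (LINT z|lborel. K z * v (x - z))"
    and th: "0 \<le> \<theta>" "\<theta> < 1"
    and far: "\<And>x. norm x \<ge> R0 \<Longrightarrow> v x \<le> \<theta> * w x"
  shows "(v \<longlongrightarrow> 0) at_infinity"
proof -
  have Km[measurable]: "K \<in> borel_measurable borel" using K by auto
  have vm'[measurable]: "v \<in> borel_measurable borel" by (rule vm)
  have V0: "V \<ge> 0" using v0[of 0] vV[of 0] by simp
  have step: "\<exists>R. \<forall>x. norm x \<ge> R \<longrightarrow> v x \<le> \<theta>^k * V + e/2" if e: "e > 0" for e k
  proof (induction k)
    case 0
    show ?case using vV e by (intro exI[of _ 0]) (auto intro: add_increasing2)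
  next
    case (Suc k)
    then obtain R where R: "\<And>x. norm x \<ge> R \<Longrightarrow> v x \<le> \<theta>^k * V + e/2" by blast
    define B where "B = \<theta>^k * V + e/2"
    have B0: "B \<ge> 0" using th V0 e by (simp add: B_def)
    define \<delta> where "\<delta> = (1 - \<theta>) * e / (2 * (V + 1))"
    have \<delta>0: "\<delta> > 0" using th e V0 by (simp add: \<delta>_def)
    obtain \<rho> where \<rho>: "(LINT z|lborel. K z * indicator (- ball 0 \<rho>) z) < \<delta>"
      using tail_small[OF K Kn \<delta>0] by blast
    show ?case
    proof (intro exI[of _ "max R0 (R + \<rho>)"] allI impI)
      fix x :: 'a assume x: "norm x \<ge> max R0 (R + \<rho>)"
      have pw: "K z * v (x - z) \<le> K z * B + V * (K z * indicator (- ball 0 \<rho>) z)" for z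
      proof (cases "norm z < \<rho>")
        case True
        have "norm (x - z) \<ge> norm x - norm z" by (rule norm_triangle_ineq2)
        then have "norm (x - z) \<ge> R" using x True by simp
        then have "v (x - z) \<le> B" using R B_def by simp
        then have "K z * v (x - z) \<le> K z * B" using Kn[of z] by (simp add: mult_left_mono)
        then show ?thesis using True by (simp add: indicator_def)
      next
        case False
        have "K z * v (x - z) \<le> K z * V" using Kn[of z] vV[of "x - z"] by (simp add: mult_left_mono)
        also have "\<dots> \<le> K z * B + V * K z" using Kn[of z] B0 by (simp add: mult.commute)
        finally show ?thesis using False by (simp add: indicator_def)
      qed
      have iKv: "integrable lborel (\<lambda>z. K z * v (x - z))"
      proof (rule Bochner_Integration.integrable_bound[of _ "\<lambda>z. V * K z"])
        show "integrable lborel (\<lambda>z. V * K z)" using K by simp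
        show "(\<lambda>z. K z * v (x - z)) \<in> borel_measurable lborel" by measurable
        show "AE z in lborel. norm (K z * v (x - z)) \<le> norm (V * K z)"
        proof (intro AE_I2)
          fix z
          have "K z * v (x - z) \<le> K z * V" by (rule mult_left_mono[OF vV Kn])
          then show "norm (K z * v (x - z)) \<le> norm (V * K z)"
            using Kn[of z] v0[of "x - z"] V0 by (simp add: mult.commute)
        qed
      qed
      have iKi: "integrable lborel (\<lambda>z. K z * indicator (- ball 0 \<rho>) z)"
      proof (rule Bochner_Integration.integrable_bound[of _ "K"])
        show "integrable lborel K" by (rule K)
        show "(\<lambda>z. K z * indicator (- ball 0 \<rho>) z) \<in> borel_measurable lborel" by measurable
        show "AE z in lborel. norm (K z * indicator (- ball 0 \<rho>) z) \<le> norm (K z)"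
          using Kn by (intro AE_I2) (simp add: indicator_def)
      qed
      have "w x \<le> (LINT z|lborel. K z * B + V * (K z * indicator (- ball 0 \<rho>) z))"
        unfolding w using iKv iKi K pw by (intro Bochner_Integration.integral_mono) auto
      also have "\<dots> = B * (LINT z|lborel. K z) + V * (LINT z|lborel. K z * indicator (- ball 0 \<rho>) z)"
        using iKi K by (simp add: mult.commute)
      also have "\<dots> \<le> B + V * \<delta>"
        using K1 \<rho> V0 by (simp add: mult_left_mono less_imp_le)
      finally have wx: "w x \<le> B + V * \<delta>" .
      have "V * \<delta> \<le> (1 - \<theta>) * e / 2"
      proof -
        have "V * \<delta> = (1 - \<theta>) * e / 2 * (V / (V + 1))" using V0 by (simp add: \<delta>_def field_simps)
        also have "\<dots> \<le> (1 - \<theta>) * e / 2 * 1"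
          using V0 th e by (intro mult_left_mono) auto
        finally show ?thesis by simp
      qed
      have "v x \<le> \<theta> * w x" using far x by simp
      also have "\<dots> \<le> \<theta> * (B + V * \<delta>)" using wx th by (simp add: mult_left_mono)
      also have "\<dots> \<le> \<theta> * (\<theta>^k * V + e/2) + \<theta> * ((1 - \<theta>) * e / 2)"
      proof -
        have "\<theta> * (V * \<delta>) \<le> \<theta> * ((1 - \<theta>) * e / 2)"
          using \<open>V * \<delta> \<le> _\<close> th by (intro mult_left_mono) auto
        then show ?thesis by (simp add: B_def distrib_left)
      qed
      also have "\<dots> \<le> \<theta>^Suc k * V + e/2"
      proof -
        have "\<theta> * (\<theta>^k * V + e/2) + \<theta> * ((1 - \<theta>) * e / 2) = \<theta>^Suc k * V + e/2 - e * (1-\<theta>)^2 / 2"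
          by (simp add: field_simps power2_eq_square)
        moreover have "e * (1-\<theta>)^2 / 2 \<ge> 0" using e by simp
        ultimately show ?thesis by linarith
      qed
      finally show "v x \<le> \<theta>^Suc k * V + e/2" .
    qed
  qed
  show ?thesis
    unfolding tendsto_iff
  proof (intro allI impI)
    fix e :: real assume e: "e > 0"
    have "(\<lambda>k. \<theta>^k * V) \<longlonglongrightarrow> 0 * V"
      using th by (intro tendsto_mult LIMSEQ_power_zero tendsto_const) auto
    then have "eventually (\<lambda>k. \<theta>^k * V < e/2) sequentially"
      using e by (intro order_tendstoD) auto
    then obtain k where k: "\<theta>^k * V < e/2" by (auto simp: eventually_sequentially)
    obtain R where R: "\<And>x. norm x \<ge> R \<Longrightarrow> v x \<le> \<theta>^k * V + e/2" using step[OF e, of k] by blast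
    show "eventually (\<lambda>x. dist (v x) 0 < e) at_infinity"
      unfolding eventually_at_infinity
    proof (intro exI[of _ R] allI impI)
      fix x :: 'a assume "R \<le> norm x"
      then have "v x \<le> \<theta>^k * V + e/2" using R by simp
      then show "dist (v x) 0 < e" using k v0[of x] by simp
    qed
  qed
qed



lemma main_fixed:
  fixes K a u :: "'a::euclidean_space \<Rightarrow> real" and c \<eta> R0 C :: real
  assumes K: "integrable lborel K" and Kn: "\<And>z. K z \<ge> 0" and Ks: "\<And>z. K (-z) = K z"
    and K1: "(LINT z|lborel. K z) = 1"
    and c: "c > 0"
    and a_cont: "continuous_on UNIV a"
    and eta: "\<eta> > 0" and far: "\<And>x. norm x \<ge> R0 \<Longrightarrow> a x \<le> -\<eta>"
    and um: "u \<in> borel_measurable lborel" and ubd: "AE x in lborel. \<bar>u x\<bar> \<le> C"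
    and u0: "AE x in lborel. u x \<ge> 0"
    and ueq: "AE x in lborel. c * (conv K u x - u x) + u x * (a x - u x) = 0"
  shows "\<exists>v. C0 v \<and> (AE x in lborel. u x = v x) \<and> ((\<forall>x. v x > 0) \<or> (\<forall>x. v x = 0))"
proof -
  have Km[measurable]: "K \<in> borel_measurable borel" using K by auto
  have um'[measurable]: "u \<in> borel_measurable borel" using um by auto
  define Cb where "Cb = max C 0"
  define ub where "ub y = max 0 (min Cb (u y))" for y
  have ubm[measurable]: "ub \<in> borel_measurable borel" unfolding ub_def by measurable
  have Cb0: "Cb \<ge> 0" by (simp add: Cb_def)
  have ub0: "\<And>y. 0 \<le> ub y" by (simp add: ub_def)
  have ubC: "\<And>y. ub y \<le> Cb" using Cb0 by (simp add: ub_def)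
  have ubabs: "\<And>y. \<bar>ub y\<bar> \<le> Cb" using ub0 ubC by simp
  have uub: "AE y in lborel. u y = ub y"
    using ubd u0 by eventually_elim (auto simp: ub_def Cb_def)
  define w where "w x = (LINT y|lborel. K (x - y) * ub y)" for x
  have convw: "\<And>x. conv K u x = w x"
  proof -
    fix x
    show "conv K u x = w x"
      unfolding conv_def w_def
    proof (rule integral_cong_AE)
      show "AE y in lborel. K (x - y) * u y = K (x - y) * ub y"
        using uub by eventually_elim simp
    qed simp_all
  qed
  have wint: "\<And>x. integrable lborel (\<lambda>y. K (x - y) * ub y)"
    by (rule conv_integrable[OF K _ ubabs]) simp
  have wcont: "continuous_on UNIV w" unfolding w_def by (rule conv_cont[OF K _ ubabs]) simp
  have wm[measurable]: "w \<in> borel_measurable borel" using borel_measurable_continuous_onI[OF wcont] .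
  have w0: "\<And>x. w x \<ge> 0" unfolding w_def by (intro integral_nonneg_AE AE_I2) (simp add: Kn ub0)
  have Kref: "\<And>x. integrable lborel (\<lambda>y. K (x - y))" using K integrable_refl[of K] by auto
  have Kref1: "\<And>x. (LINT y|lborel. K (x - y)) = 1" using K1 integral_refl[of K] by metis
  have wC: "\<And>x. w x \<le> Cb"
  proof -
    fix x
    have "w x \<le> (LINT y|lborel. K (x - y) * Cb)"
      unfolding w_def using wint Kref
      by (intro Bochner_Integration.integral_mono) (auto simp: Kn ubC mult_left_mono)
    also have "\<dots> = Cb" using Kref1 by simp
    finally show "w x \<le> Cb" .
  qed
  have eqE: "AE x in lborel. c * (w x - ub x) + ub x * (a x - ub x) = 0"
    using ueq uub by eventually_elim (simp add: convw)
  have zero_imp: "AE y in lborel. ub y = 0 \<longrightarrow> w y = 0"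
    using eqE by eventually_elim (use c in auto)
  show ?thesis
  proof (cases "AE x in lborel. ub x = 0")
    case True
    show ?thesis
    proof (intro exI[of _ "\<lambda>_. 0"] conjI)
      show "C0 (\<lambda>_. 0::real)" by (simp add: C0_def)
      show "AE x in lborel. u x = 0" using True uub by eventually_elim simp
      show "(\<forall>x::'a. (0::real) > 0) \<or> (\<forall>x::'a. (0::real) = 0)" by simp
    qed
  next
    case False
    have wpos: "\<forall>x. w x > 0"
    proof -
      define Z where "Z = {x. w x = 0}"
      have Zc: "closed Z" unfolding Z_def using wcont by (intro closed_Collect_eq) auto
      define K1 where "K1 z = min (K z) 1" for z
      have K1m[measurable]: "K1 \<in> borel_measurable borel" unfolding K1_def by measurable
      have K1n: "\<And>z. 0 \<le> K1 z" using Kn by (simp add: K1_def)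
      have K1abs: "\<And>z. \<bar>K1 z\<bar> \<le> 1" using Kn by (simp add: K1_def)
      have K1le: "\<And>z. K1 z \<le> K z" by (simp add: K1_def)
      have K1s: "\<And>z. K1 (-z) = K1 z" using Ks by (simp add: K1_def)
      have K1i: "integrable lborel K1"
      proof (rule Bochner_Integration.integrable_bound[OF K])
        show "K1 \<in> borel_measurable lborel" by simp
        show "AE x in lborel. norm (K1 x) \<le> norm (K x)" using K1n K1le Kn by (intro AE_I2) simp
      qed
      define G where "G t = (LINT s|lborel. K1 (t - s) * K1 s)" for t
      have Gcont: "continuous_on UNIV G" unfolding G_def by (rule conv_cont[OF K1i _ K1abs]) simp
      have Gint: "\<And>t. integrable lborel (\<lambda>s. K1 (t - s) * K1 s)" by (rule conv_integrable[OF K1i _ K1abs]) simp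
      have G0: "G 0 > 0"
      proof (rule ccontr)
        assume "\<not> G 0 > 0"
        moreover have "G 0 \<ge> 0" unfolding G_def by (intro integral_nonneg_AE AE_I2) (simp add: K1n)
        ultimately have "G 0 = 0" by simp
        then have "AE s in lborel. K1 (0 - s) * K1 s = 0"
          unfolding G_def using Gint[of 0] K1n by (subst (asm) integral_nonneg_eq_0_iff_AE) auto
        then have "AE s in lborel. K s = 0"
          by eventually_elim (use K1s Kn in \<open>auto simp: K1_def\<close>)
        then have "(LINT s|lborel. K s) = 0" by (rule integral_eq_zero_AE)
        then show False using K1 by simp
      qed
      obtain r where r: "r > 0" "\<And>t. norm t < r \<Longrightarrow> G t > 0"
      proof -
        obtain d where d: "d > 0" "\<And>t. dist t 0 < d \<Longrightarrow> dist (G t) (G 0) < G 0"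
          using Gcont G0 unfolding continuous_on_iff by (metis UNIV_I)
        show ?thesis
        proof (rule that[OF d(1)])
          fix t :: 'a assume "norm t < d"
          then have "dist (G t) (G 0) < G 0" using d(2) by simp
          then show "G t > 0" by (simp add: dist_real_def)
        qed
      qed
      have Zo: "open Z"
        unfolding open_contains_ball
      proof (intro ballI)
        fix x0 assume "x0 \<in> Z"
        then have wx0: "w x0 = 0" by (simp add: Z_def)
        have i: "AE y in lborel. K (x0 - y) * ub y = 0"
          using wx0 wint[of x0] Kn ub0 unfolding w_def
          by (subst (asm) integral_nonneg_eq_0_iff_AE) auto
        have ii: "AE y in lborel. K (x0 - y) * w y = 0"
          using i zero_imp by eventually_elim auto
        have nnw: "\<And>y. (\<integral>\<^sup>+z. ennreal (K (y - z) * ub z) \<partial>lborel) = ennreal (w y)"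
          unfolding w_def using wint Kn ub0 by (intro nn_integral_eq_integral) auto
        have "(\<integral>\<^sup>+y. ennreal (K (x0 - y)) * (\<integral>\<^sup>+z. ennreal (K (y - z) * ub z) \<partial>lborel) \<partial>lborel)
            = (\<integral>\<^sup>+y. ennreal (K (x0 - y) * w y) \<partial>lborel)"
          by (simp add: nnw ennreal_mult Kn w0)
        also have "\<dots> = 0"
        proof (subst nn_integral_0_iff_AE)
          show "(\<lambda>y. ennreal (K (x0 - y) * w y)) \<in> borel_measurable lborel" by measurable
          show "AE y in lborel. ennreal (K (x0 - y) * w y) = 0" using ii by eventually_elim auto
        qed
        finally have z1: "(\<integral>\<^sup>+y. ennreal (K (x0 - y)) * (\<integral>\<^sup>+z. ennreal (K (y - z) * ub z) \<partial>lborel) \<partial>lborel) = 0" .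
        have "(\<integral>\<^sup>+y. ennreal (K (x0 - y)) * (\<integral>\<^sup>+z. ennreal (K (y - z) * ub z) \<partial>lborel) \<partial>lborel)
            = (\<integral>\<^sup>+y. (\<integral>\<^sup>+z. ennreal (K (x0 - y)) * ennreal (K (y - z) * ub z) \<partial>lborel) \<partial>lborel)"
          by (subst nn_integral_cmult) auto
        also have "\<dots> = (\<integral>\<^sup>+z. (\<integral>\<^sup>+y. ennreal (K (x0 - y)) * ennreal (K (y - z) * ub z) \<partial>lborel) \<partial>lborel)"
          by (rule lborel_pair.Fubini'[symmetric]) measurable
        also have "\<dots> = (\<integral>\<^sup>+z. ennreal (ub z) * (\<integral>\<^sup>+y. ennreal (K (x0 - y) * K (y - z)) \<partial>lborel) \<partial>lborel)"
        proof (rule nn_integral_cong)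
          fix z
          have "(\<integral>\<^sup>+y. ennreal (K (x0 - y)) * ennreal (K (y - z) * ub z) \<partial>lborel)
              = (\<integral>\<^sup>+y. ennreal (ub z) * ennreal (K (x0 - y) * K (y - z)) \<partial>lborel)"
            by (intro nn_integral_cong) (simp add: ennreal_mult[symmetric] Kn ub0 mult_nonneg_nonneg mult_ac)
          also have "\<dots> = ennreal (ub z) * (\<integral>\<^sup>+y. ennreal (K (x0 - y) * K (y - z)) \<partial>lborel)"
            by (rule nn_integral_cmult) measurable
          finally show "(\<integral>\<^sup>+y. ennreal (K (x0 - y)) * ennreal (K (y - z) * ub z) \<partial>lborel)
              = ennreal (ub z) * (\<integral>\<^sup>+y. ennreal (K (x0 - y) * K (y - z)) \<partial>lborel)" .
        qed
        finally have "(\<integral>\<^sup>+z. ennreal (ub z) * (\<integral>\<^sup>+y. ennreal (K (x0 - y) * K (y - z)) \<partial>lborel) \<partial>lborel) = 0"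
          using z1 by simp
        then have ae3: "AE z in lborel. ennreal (ub z) * (\<integral>\<^sup>+y. ennreal (K (x0 - y) * K (y - z)) \<partial>lborel) = 0"
          by (subst (asm) nn_integral_0_iff_AE) measurable
        have Qlow: "ennreal (G (x0 - z)) \<le> (\<integral>\<^sup>+y. ennreal (K (x0 - y) * K (y - z)) \<partial>lborel)" for z
        proof -
          have "ennreal (G (x0 - z)) = (\<integral>\<^sup>+s. ennreal (K1 (x0 - z - s) * K1 s) \<partial>lborel)"
            unfolding G_def using Gint K1n by (intro nn_integral_eq_integral[symmetric]) auto
          also have "\<dots> = (\<integral>\<^sup>+s. ennreal (K1 (x0 - (s + z)) * K1 ((s + z) - z)) \<partial>lborel)"
            by (simp add: algebra_simps)
          also have "\<dots> = (\<integral>\<^sup>+y. ennreal (K1 (x0 - y) * K1 (y - z)) \<partial>lborel)"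
            by (rule nn_integral_transl[of "\<lambda>y. ennreal (K1 (x0 - y) * K1 (y - z))" z]) measurable
          also have "\<dots> \<le> (\<integral>\<^sup>+y. ennreal (K (x0 - y) * K (y - z)) \<partial>lborel)"
            by (intro nn_integral_mono ennreal_leI mult_mono K1le K1n Kn)
          finally show ?thesis .
        qed
        have ub_ball: "AE z in lborel. z \<in> ball x0 r \<longrightarrow> w z \<le> 0"
          using ae3 zero_imp
        proof eventually_elim
          case (elim z)
          show ?case
          proof
            assume "z \<in> ball x0 r"
            then have "norm (x0 - z) < r" by (simp add: dist_norm)
            then have "G (x0 - z) > 0" using r(2) by simp
            then have "(\<integral>\<^sup>+y. ennreal (K (x0 - y) * K (y - z)) \<partial>lborel) \<noteq> 0"
              using Qlow[of z] by (metis ennreal_eq_0_iff leD not_gr_zero)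
            then have "ennreal (ub z) = 0" using elim(1) by simp
            then have "ub z = 0" using ub0[of z] by simp
            then show "w z \<le> 0" using elim(2) by simp
          qed
        qed
        have "\<forall>z\<in>ball x0 r. w z \<le> 0"
          by (rule cont_AE_le_open[OF wcont open_ball ub_ball])
        then have "ball x0 r \<subseteq> Z"
        proof (intro subsetI)
          fix z assume "\<forall>z\<in>ball x0 r. w z \<le> 0" "z \<in> ball x0 r"
          then have "w z \<le> 0" by blast
          with w0[of z] show "z \<in> Z" by (simp add: Z_def)
        qed
        then show "\<exists>e>0. ball x0 e \<subseteq> Z" using r(1) by blast
      qed
      have oZ: "openin (top_of_set (UNIV::'a set)) Z" using Zo by (metis open_openin subtopology_UNIV)
      have cZ: "closedin (top_of_set (UNIV::'a set)) Z" using Zc by (metis closed_closedin subtopology_UNIV)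
      have CC: "\<forall>T. openin (top_of_set (UNIV::'a set)) T \<and> closedin (top_of_set UNIV) T \<longrightarrow> T = {} \<or> T = UNIV"
        using connected_UNIV[where 'a='a] unfolding connected_clopen by blast
      have "Z = {} \<or> Z = UNIV" using CC oZ cZ by blast
      moreover have "Z \<noteq> UNIV"
      proof
        assume "Z = UNIV"
        then have wz: "\<And>x. w x = 0" by (auto simp: Z_def)
        have nnw: "\<And>x. (\<integral>\<^sup>+y. ennreal (K (x - y) * ub y) \<partial>lborel) = 0"
          unfolding w_def using wint Kn ub0 wz[unfolded w_def]
          by (subst nn_integral_eq_integral) auto
        have KK: "\<And>y. (\<integral>\<^sup>+x. ennreal (K (x - y)) \<partial>lborel) = 1"
        proof -
          fix y
          have "(\<integral>\<^sup>+x. ennreal (K (x - y)) \<partial>lborel) = (\<integral>\<^sup>+x. ennreal (K (x + (-y))) \<partial>lborel)" by simp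
          also have "\<dots> = (\<integral>\<^sup>+x. ennreal (K x) \<partial>lborel)"
            by (rule nn_integral_transl[of "\<lambda>x. ennreal (K x)"]) measurable
          also have "\<dots> = 1" using K K1 Kn by (subst nn_integral_eq_integral) auto
          finally show "(\<integral>\<^sup>+x. ennreal (K (x - y)) \<partial>lborel) = 1" .
        qed
        have "0 = (\<integral>\<^sup>+x. (\<integral>\<^sup>+y. ennreal (K (x - y) * ub y) \<partial>lborel) \<partial>lborel)" by (simp add: nnw)
        also have "\<dots> = (\<integral>\<^sup>+y. (\<integral>\<^sup>+x. ennreal (K (x - y) * ub y) \<partial>lborel) \<partial>lborel)"
          by (rule lborel_pair.Fubini'[symmetric]) measurable
        also have "\<dots> = (\<integral>\<^sup>+y. ennreal (ub y) \<partial>lborel)"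
        proof (rule nn_integral_cong)
          fix y
          have "(\<integral>\<^sup>+x. ennreal (K (x - y) * ub y) \<partial>lborel) = (\<integral>\<^sup>+x. ennreal (ub y) * ennreal (K (x - y)) \<partial>lborel)"
            by (intro nn_integral_cong) (simp add: ennreal_mult[symmetric] Kn ub0 mult.commute)
          also have "\<dots> = ennreal (ub y) * (\<integral>\<^sup>+x. ennreal (K (x - y)) \<partial>lborel)"
            by (rule nn_integral_cmult) measurable
          finally show "(\<integral>\<^sup>+x. ennreal (K (x - y) * ub y) \<partial>lborel) = ennreal (ub y)" using KK by simp
        qed
        finally have "AE y in lborel. ennreal (ub y) = 0"
          by (subst (asm) eq_commute, subst (asm) nn_integral_0_iff_AE) measurable
        then have "AE y in lborel. ub y = 0" by eventually_elim (use ub0 in auto)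
        then show False using False by simp
      qed
      ultimately have "Z = {}" by simp
      then show ?thesis using w0 by (auto simp: Z_def order_le_less)
    qed
    define v where "v x = ((a x - c) + sqrt ((a x - c)^2 + 4 * c * w x)) / 2" for x
    have vcont: "continuous_on UNIV v"
      unfolding v_def by (intro continuous_intros a_cont wcont) auto
    have vm[measurable]: "v \<in> borel_measurable borel" using borel_measurable_continuous_onI[OF vcont] .
    have vquad: "v x * v x + (c - a x) * v x = c * w x" for x
    proof -
      define D where "D = (a x - c)^2 + 4 * c * w x"
      have D0: "D \<ge> 0" using c w0[of x] by (simp add: D_def)
      have sD: "sqrt D * sqrt D = D" using D0 by simp
      have gen: "\<And>a c s::real. ((a - c + s)/2)*((a - c + s)/2) + (c - a)*((a - c + s)/2) = (s * s - (a - c)^2) / 4"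
        by (simp add: field_simps power2_eq_square)
      have vx: "v x = ((a x - c) + sqrt D) / 2" by (simp add: v_def D_def)
      have "v x * v x + (c - a x) * v x = (sqrt D * sqrt D - (a x - c)^2) / 4"
        unfolding vx by (rule gen)
      also have "\<dots> = c * w x" using sD by (simp add: D_def)
      finally show ?thesis .
    qed
    have v0: "v x \<ge> 0" for x
    proof -
      have "sqrt ((a x - c)^2) \<le> sqrt ((a x - c)^2 + 4 * c * w x)"
        using c w0[of x] by (intro real_sqrt_le_mono) simp
      then have "\<bar>a x - c\<bar> \<le> sqrt ((a x - c)^2 + 4 * c * w x)" by simp
      then show ?thesis by (simp add: v_def)
    qed
    have vpos: "v x > 0" for x
    proof (rule ccontr)
      assume "\<not> v x > 0"
      then have "v x = 0" using v0[of x] by simp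
      then have "c * w x = 0" using vquad[of x] by simp
      then show False using c wpos[rule_format, of x] by simp
    qed
    have AEubv: "AE x in lborel. ub x = v x"
      using eqE
    proof eventually_elim
      case (elim x)
      have "ub x * ub x + (c - a x) * ub x = c * w x" using elim by (simp add: algebra_simps)
      moreover have "c * w x > 0" using c wpos by simp
      ultimately show "ub x = v x"
        using root_unique[OF ub0[of x] v0[of x] _ vquad[of x]] by simp
    qed
    have AEuv: "AE x in lborel. u x = v x" using uub AEubv by eventually_elim simp
    have vC: "v x \<le> Cb" for x
    proof -
      have "AE x in lborel. x \<in> UNIV \<longrightarrow> v x - Cb \<le> 0"
        using AEubv by eventually_elim (use ubC in \<open>metis diff_le_0_iff_le\<close>)
      moreover have "continuous_on UNIV (\<lambda>x. v x - Cb)" using vcont by (intro continuous_intros) auto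
      ultimately show ?thesis using cont_AE_le_open[OF _ open_UNIV] by fastforce
    qed
    have wrep: "w x = (LINT z|lborel. K z * v (x - z))" for x
    proof -
      have "w x = (LINT y|lborel. K (x - y) * v y)"
        unfolding w_def
      proof (rule integral_cong_AE)
        show "AE y in lborel. K (x - y) * ub y = K (x - y) * v y" using AEubv by eventually_elim simp
      qed simp_all
      also have "\<dots> = (LINT z|lborel. K (x - (x - z)) * v (x - z))"
        by (rule integral_refl)
      finally show ?thesis by simp
    qed
    define \<theta> where "\<theta> = c / (c + \<eta>)"
    have th: "0 \<le> \<theta>" "\<theta> < 1" using c eta by (auto simp: \<theta>_def)
    have farv: "v x \<le> \<theta> * w x" if x: "norm x \<ge> R0" for x
    proof -
      have ax: "a x \<le> -\<eta>" using far x by simp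
      have "v x * (c + \<eta>) \<le> v x * (c - a x)" using ax v0[of x] by (intro mult_left_mono) auto
      also have "\<dots> \<le> v x * v x + (c - a x) * v x" using v0[of x] by (simp add: mult.commute)
      also have "\<dots> = c * w x" by (rule vquad)
      finally have "v x * (c + \<eta>) \<le> c * w x" .
      then show ?thesis using c eta by (simp add: \<theta>_def field_simps)
    qed
    have vlim: "(v \<longlongrightarrow> 0) at_infinity"
      by (rule vanish_at_infinity[OF K Kn K1 vm v0 vC wrep th farv]) simp
    show ?thesis
    proof (intro exI[of _ v] conjI)
      show "C0 v" unfolding C0_def using vcont vlim by simp
      show "AE x in lborel. u x = v x" by (rule AEuv)
      show "(\<forall>x. v x > 0) \<or> (\<forall>x. v x = 0)" using vpos by simp
    qed
  qed
qed


lemma kernel_facts: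
  fixes J :: "'a::euclidean_space \<Rightarrow> real" and eps :: real
  assumes J_int: "integrable lborel J" and J_nonneg: "\<And>z. J z \<ge> 0"
    and J_radial: "\<And>x y. norm x = norm y \<Longrightarrow> J x = J y"
    and J_mass: "(LINT z|lborel. J z) = 1" and eps: "eps > 0"
  shows "integrable lborel (kernel_scale eps J)"
    and "\<And>z. kernel_scale eps J z \<ge> 0"
    and "\<And>z. kernel_scale eps J (-z) = kernel_scale eps J z"
    and "(LINT z|lborel. kernel_scale eps J z) = 1"
proof -
  have ks: "kernel_scale eps J = (\<lambda>z. J (0 + (1/eps) *\<^sub>R z) / eps ^ DIM('a))"
    by (rule ext) (simp add: kernel_scale_def divide_inverse_commute)
  have ip: "integrable lborel (\<lambda>z. J (0 + (1/eps) *\<^sub>R z))"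
    using integrable_affine_eucl[OF J_int, of "1/eps" 0] eps by simp
  then show "integrable lborel (kernel_scale eps J)"
    unfolding ks by simp
  show "\<And>z. kernel_scale eps J z \<ge> 0" using J_nonneg eps by (simp add: kernel_scale_def)
  show "\<And>z. kernel_scale eps J (-z) = kernel_scale eps J z"
    unfolding kernel_scale_def by (subst J_radial[of "(-z) /\<^sub>R eps" "z /\<^sub>R eps"]) auto
  have "(LINT z|lborel. J z) = \<bar>1/eps\<bar> ^ DIM('a) * (LINT z|lborel. J (0 + (1/eps) *\<^sub>R z))"
    by (rule integral_affine_eucl) (use eps in simp)
  then have I: "(LINT z|lborel. J (0 + (1/eps) *\<^sub>R z)) = eps ^ DIM('a)"
    using J_mass eps by (simp add: power_divide field_simps)
  show "(LINT z|lborel. kernel_scale eps J z) = 1"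
    unfolding ks using I eps by simp
qed

theorem proposition2p3:
  fixes a :: "'a::euclidean_space \<Rightarrow> real"
    and J :: "'a \<Rightarrow> real"
    and m eps0 :: real
    and u :: "real \<Rightarrow> 'a \<Rightarrow> real"
  assumes m_range: "0 \<le> m" "m \<le> 2"
    and a_cont: "continuous_on UNIV a"
    and a_Linf: "Linf a"
    and a_pos_part: "\<exists>x. a x > 0"
    and a_limsup: "Limsup at_infinity (\<lambda>x. ereal (a x)) < 0"
    and J_int: "integrable lborel J"
    and J_nonneg: "\<And>z. J z \<ge> 0"
    and J_radial: "\<And>x y. norm x = norm y \<Longrightarrow> J x = J y"
    and J_mass: "(LINT z|lborel. J z) = 1"
    and eps0_pos: "eps0 > 0"
    and u_Linf: "\<And>eps. 0 < eps \<Longrightarrow> eps < eps0 \<Longrightarrow> Linf (u eps)"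
    and u_nonneg: "\<And>eps. 0 < eps \<Longrightarrow> eps < eps0 \<Longrightarrow> AE x in lborel. u eps x \<ge> 0"
    and u_eq: "\<And>eps. 0 < eps \<Longrightarrow> eps < eps0 \<Longrightarrow>
       AE x in lborel. (1 / eps powr m) * (conv (kernel_scale eps J) (u eps) x - u eps x)
                        + u eps x * (a x - u eps x) = 0"
  shows "\<exists>eps1 > 0. \<forall>eps. 0 < eps \<and> eps < min eps0 eps1 \<longrightarrow>
           (\<exists>v. C0 v \<and> (AE x in lborel. u eps x = v x) \<and>
                ((\<forall>x. v x > 0) \<or> (\<forall>x. v x = 0)))"
proof -
  obtain z :: ereal where z: "Limsup at_infinity (\<lambda>x. ereal (a x)) < z" "z < 0"
    using a_limsup dense by blast
  have zfin: "z \<noteq> \<infinity>" "z \<noteq> -\<infinity>" using z by auto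
  define q where "q = real_of_ereal z"
  have zq: "z = ereal q" using zfin unfolding q_def by (cases z) auto
  have q0: "q < 0" using z(2) zq by simp
  have "eventually (\<lambda>x. ereal (a x) < z) at_infinity" by (rule Limsup_lessD[OF z(1)])
  then obtain R0 where R0: "\<And>x. R0 \<le> norm x \<Longrightarrow> a x < q"
    unfolding eventually_at_infinity zq by auto
  have far: "\<And>x. norm x \<ge> R0 \<Longrightarrow> a x \<le> - (- q)" using R0 by (simp add: less_imp_le)
  have eta: "- q > 0" using q0 by simp
  have main: "\<exists>v. C0 v \<and> (AE x in lborel. u eps x = v x) \<and> ((\<forall>x. v x > 0) \<or> (\<forall>x. v x = 0))"
    if eps: "0 < eps" "eps < eps0" for eps
  proof -
    note kf = kernel_facts[OF J_int J_nonneg J_radial J_mass eps(1)]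
    obtain C where um: "u eps \<in> borel_measurable lborel" and ub: "AE x in lborel. \<bar>u eps x\<bar> \<le> C"
      using u_Linf[OF eps] unfolding Linf_def by blast
    have c: "1 / eps powr m > 0" using eps by simp
    show ?thesis
      by (rule main_fixed[OF kf(1) kf(2) kf(3) kf(4) c a_cont eta far um ub u_nonneg[OF eps] u_eq[OF eps]])
  qed
  show ?thesis
    using main eps0_pos by (intro exI[of _ eps0]) auto
qed

end
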